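(* Every fragile graph $G$ of girth at least $4$ with $|V(G)|\geq 3$ satisfies $|E(G)|\leq 2|V(G)|-4$. Consequently every non-null fragile graph of girth at least $4$ has a vertex of degree at most $3$ and is $4$-colourable.
   Context: All graphs are finite and simple. A graph is $k$-connected if it has at least $k+1$ vertices and no vertex cutset with at most $k-1$ vertices. A graph is fragile if it has no $3$-connected subgraph. The girth of a graph is the length of its shortest cycle (infinite if the graph is acyclic). *)

theory Defs
  imports Main "HOL-Library.Extended_Nat"
begin

definition graph :: "'a set \<Rightarrow> 'a set set \<Rightarrow> bool" where
  "graph V E \<longleftrightarrow> finite V \<and> (\<forall>e\<in>E. e \<subseteq> V \<and> card e = 2)"

definition subgraph :: "'a set \<Rightarrow> 'a set set \<Rightarrow> 'a set \<Rightarrow> 'a set set \<Rightarrow> bool" where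
  "subgraph V' E' V E \<longleftrightarrow> V' \<subseteq> V \<and> E' \<subseteq> E \<and> (\<forall>e\<in>E'. e \<subseteq> V')"

definition adj_rel :: "'a set set \<Rightarrow> ('a \<times> 'a) set" where
  "adj_rel E = {(x, y). {x, y} \<in> E}"

definition connected_graph :: "'a set \<Rightarrow> 'a set set \<Rightarrow> bool" where
  "connected_graph V E \<longleftrightarrow> (\<forall>u\<in>V. \<forall>v\<in>V. (u, v) \<in> (adj_rel E)\<^sup>*)"

definition delete_vertices :: "'a set \<Rightarrow> 'a set set \<Rightarrow> 'a set \<Rightarrow> 'a set \<times> 'a set set" where
  "delete_vertices V E S = (V - S, {e\<in>E. e \<inter> S = {}})"

definition k_connected :: "nat \<Rightarrow> 'a set \<Rightarrow> 'a set set \<Rightarrow> bool" where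
  "k_connected k V E \<longleftrightarrow> card V \<ge> k + 1 \<and>
     (\<forall>S. S \<subseteq> V \<and> card S \<le> k - 1 \<longrightarrow>
        connected_graph (fst (delete_vertices V E S)) (snd (delete_vertices V E S)))"

definition fragile :: "'a set \<Rightarrow> 'a set set \<Rightarrow> bool" where
  "fragile V E \<longleftrightarrow> \<not> (\<exists>V' E'. subgraph V' E' V E \<and> graph V' E' \<and> k_connected 3 V' E')"

definition is_cycle :: "'a set \<Rightarrow> 'a set set \<Rightarrow> 'a list \<Rightarrow> bool" where
  "is_cycle V E c \<longleftrightarrow> length c \<ge> 3 \<and> distinct c \<and> set c \<subseteq> V \<and>
     (\<forall>i < length c. {c ! i, c ! ((i + 1) mod length c)} \<in> E)"

definition girth :: "'a set \<Rightarrow> 'a set set \<Rightarrow> enat" where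
  "girth V E = (INF c \<in> {c. is_cycle V E c}. enat (length c))"

definition degree :: "'a set set \<Rightarrow> 'a \<Rightarrow> nat" where
  "degree E v = card {e\<in>E. v \<in> e}"

definition colourable :: "nat \<Rightarrow> 'a set \<Rightarrow> 'a set set \<Rightarrow> bool" where
  "colourable k V E \<longleftrightarrow> (\<exists>col :: 'a \<Rightarrow> nat. (\<forall>v\<in>V. col v < k) \<and>
     (\<forall>u v. {u, v} \<in> E \<longrightarrow> col u \<noteq> col v))"

end

theory Submission imports Defs begin

definition tf :: "'a set set \<Rightarrow> bool" where
  "tf E \<longleftrightarrow> (\<forall>a b c. {a,b} \<in> E \<longrightarrow> {b,c} \<in> E \<longrightarrow> {a,c} \<in> E \<longrightarrow> False)"

definition fb :: "nat \<Rightarrow> nat" where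
  "fb n = (if n \<ge> 3 then 2*n - 4 else if n = 2 then 1 else 0)"

lemma edge_ne:
  assumes g: "graph V E" and "{a,b} \<in> E" shows "a \<noteq> b" "a \<in> V" "b \<in> V"
proof -
  have "card {a,b} = 2" "{a,b} \<subseteq> V" using assms by (auto simp: graph_def)
  thus "a \<noteq> b" "a \<in> V" "b \<in> V" by (auto simp: card_insert_if split: if_splits)
qed

lemma girth_tf:
  assumes g: "graph V E" and gi: "girth V E \<ge> 4"
  shows "tf E"
  unfolding tf_def
proof (intro allI impI)
  fix a b c assume ab: "{a,b} \<in> E" and bc: "{b,c} \<in> E" and ac: "{a,c} \<in> E"
  note n1 = edge_ne[OF g ab] and n2 = edge_ne[OF g bc] and n3 = edge_ne[OF g ac]
  have "is_cycle V E [a,b,c]"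
  proof -
    have ca: "{c,a} \<in> E" using ac by (simp add: insert_commute)
    have e: "\<forall>i<length [a,b,c]. {[a,b,c] ! i, [a,b,c] ! ((i + 1) mod length [a,b,c])} \<in> E"
    proof (intro allI impI)
      fix i assume "i < length [a,b,c]"
      hence "i = 0 \<or> i = 1 \<or> i = 2" by auto
      thus "{[a,b,c] ! i, [a,b,c] ! ((i + 1) mod length [a,b,c])} \<in> E"
        using ab bc ca by auto
    qed
    show ?thesis unfolding is_cycle_def using e n1 n2 n3 by auto
  qed
  hence "[a,b,c] \<in> {c. is_cycle V E c}" by simp
  hence "girth V E \<le> enat (length [a,b,c])" unfolding girth_def by (rule INF_lower)
  moreover have "length [a,b,c] = 3" by simp
  ultimately have "girth V E \<le> enat 3" by (simp add: numeral_3_eq_3)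
  with gi have "(4::enat) \<le> enat 3" by (rule order_trans)
  thus False by (simp add: numeral_eq_enat)
qed

lemma sub_fragile:
  assumes "fragile V E" "subgraph V' E' V E" shows "fragile V' E'"
proof -
  have "\<And>A B. subgraph A B V' E' \<Longrightarrow> subgraph A B V E"
    using assms(2) unfolding subgraph_def by (meson subset_trans)
  thus ?thesis using assms(1) unfolding fragile_def by meson
qed

lemma edges_sub: assumes "graph V E" shows "E \<subseteq> {e. e \<subseteq> V \<and> card e = 2}" "finite E"
proof -
  show "E \<subseteq> {e. e \<subseteq> V \<and> card e = 2}" using assms by (auto simp: graph_def)
  moreover have "finite {e. e \<subseteq> V \<and> card e = 2}" using assms by (auto simp: graph_def)
  ultimately show "finite E" by (rule finite_subset)
qed

lemma card_E_choose: assumes "graph V E" shows "card E \<le> card V choose 2"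
proof -
  have "card E \<le> card {e. e \<subseteq> V \<and> card e = 2}"
    using edges_sub[OF assms] assms by (intro card_mono) (auto simp: graph_def)
  also have "\<dots> = card V choose 2" using assms by (simp add: graph_def n_subsets)
  finally show ?thesis .
qed

lemma small_bound:
  assumes g: "graph V E" and t: "tf E" and "card V \<le> 3"
  shows "card E \<le> fb (card V)"
proof (cases "card V = 3")
  case True
  then obtain a b c where V: "V = {a,b,c}" and d: "a \<noteq> b" "b \<noteq> c" "a \<noteq> c"
    by (auto simp: card_3_iff)
  have sub: "E \<subseteq> {{a,b},{b,c},{a,c}}"
  proof
    fix e assume "e \<in> E"
    hence "card e = 2" "e \<subseteq> V" using g by (auto simp: graph_def)
    then obtain x y where "e = {x,y}" "x \<noteq> y" by (auto simp: card_2_iff)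
    thus "e \<in> {{a,b},{b,c},{a,c}}" using \<open>e \<subseteq> V\<close> V by (auto simp: insert_commute)
  qed
  have "\<not> ({a,b} \<in> E \<and> {b,c} \<in> E \<and> {a,c} \<in> E)" using t by (auto simp: tf_def)
  hence ne: "E \<noteq> {{a,b},{b,c},{a,c}}" by auto
  have fin: "finite {{a,b},{b,c},{a,c}}" by simp
  have "card E < card {{a,b},{b,c},{a,c}}"
    using sub ne fin by (intro psubset_card_mono) auto
  moreover have "card {{a,b},{b,c},{a,c}} \<le> 3" by (simp add: card_insert_if)
  ultimately have "card E \<le> 2" by linarith
  thus ?thesis using True by (simp add: fb_def)
next
  case False
  hence "card V \<le> 2" using assms by simp
  hence "card V choose 2 \<le> fb (card V)"
  proof -
    have "card V = 0 \<or> card V = 1 \<or> card V = 2" using \<open>card V \<le> 2\<close> by linarith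
    thus ?thesis by (auto simp: fb_def)
  qed
  thus ?thesis using card_E_choose[OF g] by linarith
qed


lemma fb_arith:
  assumes "a \<ge> 1" "b \<ge> 1" "k \<le> 2" "a + b + k \<ge> 4"
  shows "fb (a + k) + fb (b + k) \<le> fb (a + b + k)"
  using assms unfolding fb_def by auto

lemma tf_mono: "tf E \<Longrightarrow> E' \<subseteq> E \<Longrightarrow> tf E'"
  unfolding tf_def by blast

lemma edge_bound:
  "graph V E \<Longrightarrow> fragile V E \<Longrightarrow> tf E \<Longrightarrow> card E \<le> fb (card V)"
proof (induction "card V" arbitrary: V E rule: less_induct)
  case less
  have g: "graph V E" and fr: "fragile V E" and t: "tf E" using less.prems by auto
  have finV: "finite V" using g by (simp add: graph_def)
  show ?case
  proof (cases "card V \<le> 3")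
    case True thus ?thesis using small_bound g t by blast
  next
    case False
    have "subgraph V E V E" using g by (auto simp: subgraph_def graph_def)
    hence "\<not> k_connected 3 V E" using fr g unfolding fragile_def by blast
    then obtain S where S: "S \<subseteq> V" "card S \<le> 2"
      and nc: "\<not> connected_graph (V - S) {e\<in>E. e \<inter> S = {}}"
      using False unfolding k_connected_def delete_vertices_def by auto
    define ES where "ES = {e\<in>E. e \<inter> S = {}}"
    from nc obtain u v where uv: "u \<in> V - S" "v \<in> V - S" "(u,v) \<notin> (adj_rel ES)\<^sup>*"
      unfolding connected_graph_def ES_def by auto
    define A where "A = {x \<in> V - S. (u,x) \<in> (adj_rel ES)\<^sup>*}"
    define B where "B = V - S - A"
    have key: "y \<in> A \<union> S" if x: "x \<in> A" and e: "{x,y} \<in> E" for x y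
    proof (cases "y \<in> S")
      case True thus ?thesis by simp
    next
      case False
      have "x \<notin> S" using x A_def by auto
      hence "{x,y} \<in> ES" using e False by (auto simp: ES_def)
      hence r1: "(x,y) \<in> adj_rel ES" by (simp add: adj_rel_def)
      have r0: "(u,x) \<in> (adj_rel ES)\<^sup>*" using x A_def by auto
      have "(u,y) \<in> (adj_rel ES)\<^sup>*" using r0 r1 by (rule rtrancl_into_rtrancl)
      moreover have "y \<in> V" using edge_ne[OF g e] by simp
      ultimately show ?thesis using A_def False by auto
    qed
    define V1 where "V1 = A \<union> S"
    define V2 where "V2 = B \<union> S"
    define E1 where "E1 = {e\<in>E. e \<subseteq> V1}"
    define E2 where "E2 = {e\<in>E. e \<subseteq> V2}"
    have EU: "E \<subseteq> E1 \<union> E2"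
    proof
      fix e assume e: "e \<in> E"
      hence "card e = 2" using g by (auto simp: graph_def)
      then obtain x y where exy: "e = {x,y}" by (auto simp: card_2_iff)
      have exy': "{y,x} \<in> E" using e exy by (simp add: insert_commute)
      have xy: "x \<in> V" "y \<in> V" using edge_ne[OF g] e exy by auto
      show "e \<in> E1 \<union> E2"
      proof (cases "x \<in> A \<or> y \<in> A")
        case True
        hence "x \<in> A \<union> S \<and> y \<in> A \<union> S"
          using key[of x y] key[of y x] e exy exy' by auto
        thus ?thesis using e exy V1_def E1_def by auto
      next
        case False
        hence "x \<in> B \<union> S" "y \<in> B \<union> S" using xy B_def by auto
        thus ?thesis using e exy V2_def E2_def by auto
      qed
    qed
    have finE: "finite E" using edges_sub[OF g] by simp
    have fE1: "finite E1" "finite E2" using finE E1_def E2_def by auto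
    have cE: "card E \<le> card E1 + card E2"
    proof -
      have "card E \<le> card (E1 \<union> E2)" using EU fE1 by (intro card_mono) auto
      also have "\<dots> \<le> card E1 + card E2" by (rule card_Un_le)
      finally show ?thesis .
    qed
    have finA: "finite A" "finite B" "finite S" using finV S A_def B_def
      by (auto intro: finite_subset)
    have dAS: "A \<inter> S = {}" "B \<inter> S = {}" "A \<inter> B = {}" using A_def B_def by auto
    have cV1: "card V1 = card A + card S" unfolding V1_def using finA dAS by (simp add: card_Un_disjoint)
    have cV2: "card V2 = card B + card S" unfolding V2_def using finA dAS by (simp add: card_Un_disjoint)
    have VU: "V = (A \<union> B) \<union> S" using S A_def B_def by auto
    have cV: "card V = card A + card B + card S"
      using finA dAS by (subst VU, subst card_Un_disjoint) (auto simp: card_Un_disjoint)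
    have "u \<in> A" using uv A_def by auto
    hence a1: "card A \<ge> 1" using finA by (metis One_nat_def Suc_leI card_gt_0_iff empty_iff)
    have "v \<in> B" using uv A_def B_def by auto
    hence b1: "card B \<ge> 1" using finA by (metis One_nat_def Suc_leI card_gt_0_iff empty_iff)
    have sub1: "subgraph V1 E1 V E" using VU V1_def E1_def by (auto simp: subgraph_def)
    have sub2: "subgraph V2 E2 V E" using VU V2_def E2_def by (auto simp: subgraph_def)
    have g1: "graph V1 E1" using g finV VU V1_def E1_def by (auto simp: graph_def intro: finite_subset)
    have g2: "graph V2 E2" using g finV VU V2_def E2_def by (auto simp: graph_def intro: finite_subset)
    have IH1: "card E1 \<le> fb (card V1)"
      using less.hyps[of V1 E1] cV1 cV a1 b1 g1 sub_fragile[OF fr sub1] tf_mono[OF t] E1_def by auto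
    have IH2: "card E2 \<le> fb (card V2)"
      using less.hyps[of V2 E2] cV2 cV a1 b1 g2 sub_fragile[OF fr sub2] tf_mono[OF t] E2_def by auto
    have "fb (card A + card S) + fb (card B + card S) \<le> fb (card A + card B + card S)"
      using a1 b1 S(2) False cV by (intro fb_arith) auto
    thus ?thesis using cE IH1 IH2 unfolding cV1 cV2 cV by linarith
  qed
qed


lemma handshake:
  assumes g: "graph V E" shows "(\<Sum>v\<in>V. degree E v) = 2 * card E"
proof -
  have finV: "finite V" using g by (simp add: graph_def)
  have finE: "finite E" using edges_sub[OF g] by simp
  have "(\<Sum>v\<in>V. degree E v) = (\<Sum>v\<in>V. \<Sum>e\<in>E. if v \<in> e then 1 else 0)"
    unfolding degree_def using finE by (simp add: sum.inter_filter[symmetric])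
  also have "\<dots> = (\<Sum>e\<in>E. \<Sum>v\<in>V. if v \<in> e then 1 else 0)" by (rule sum.swap)
  also have "\<dots> = (\<Sum>e\<in>E. 2)"
  proof (rule sum.cong)
    fix e assume e: "e \<in> E"
    have "(\<Sum>v\<in>V. if v \<in> e then 1 else 0) = card {v\<in>V. v \<in> e}"
      using finV by (simp add: sum.inter_filter[symmetric])
    also have "{v\<in>V. v \<in> e} = e" using g e by (auto simp: graph_def)
    also have "card e = 2" using g e by (auto simp: graph_def)
    finally show "(\<Sum>v\<in>V. if v \<in> e then 1 else (0::nat)) = 2" .
  qed simp
  finally show ?thesis by simp
qed

lemma low_degree:
  assumes g: "graph V E" and fr: "fragile V E" and t: "tf E" and ne: "V \<noteq> {}"
  shows "\<exists>v\<in>V. degree E v \<le> 3"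
proof (rule ccontr)
  assume "\<not> ?thesis"
  hence d: "\<forall>v\<in>V. degree E v \<ge> 4" by auto
  have finV: "finite V" using g by (simp add: graph_def)
  have finE: "finite E" using edges_sub[OF g] by simp
  have eb: "card E \<le> fb (card V)" using edge_bound g fr t by blast
  obtain w where w: "w \<in> V" using ne by auto
  show False
  proof (cases "card V \<ge> 3")
    case True
    have "4 * card V \<le> (\<Sum>v\<in>V. degree E v)"
      using sum_mono[of V "\<lambda>_. 4" "degree E"] d by simp
    also have "\<dots> = 2 * card E" by (rule handshake[OF g])
    finally show False using eb True unfolding fb_def by simp
  next
    case False
    hence "card E \<le> 1" using eb unfolding fb_def by (auto split: if_splits)
    moreover have "degree E w \<le> card E" unfolding degree_def using finE by (intro card_mono) auto
    ultimately show False using d w by fastforce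
  qed
qed

lemma colour:
  "graph V E \<Longrightarrow> fragile V E \<Longrightarrow> tf E \<Longrightarrow> colourable 4 V E"
proof (induction "card V" arbitrary: V E rule: less_induct)
  case less
  have g: "graph V E" and fr: "fragile V E" and t: "tf E" using less.prems by auto
  have finV: "finite V" using g by (simp add: graph_def)
  show ?case
  proof (cases "V = {}")
    case True
    hence "E = {}" using g by (auto simp: graph_def)
    thus ?thesis unfolding colourable_def using True by auto
  next
    case False
    then obtain v where v: "v \<in> V" "degree E v \<le> 3" using low_degree g fr t by blast
    define V' where "V' = V - {v}"
    define E' where "E' = {e\<in>E. v \<notin> e}"
    have sub: "subgraph V' E' V E" using g unfolding V'_def E'_def subgraph_def graph_def by auto
    have g': "graph V' E'" using g unfolding V'_def E'_def graph_def by auto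
    have "card V' < card V" using v finV V'_def by (metis card_Diff1_less)
    hence "colourable 4 V' E'"
      using less.hyps g' sub_fragile[OF fr sub] tf_mono[OF t, of E'] E'_def by auto
    then obtain col :: "_ \<Rightarrow> nat" where c1: "\<forall>x\<in>V'. col x < 4" and c2: "\<forall>x y. {x,y} \<in> E' \<longrightarrow> col x \<noteq> col y"
      unfolding colourable_def by blast
    define N where "N = {u. {u,v} \<in> E}"
    have NV: "N \<subseteq> V" unfolding N_def using edge_ne[OF g] by blast
    have finN: "finite N" using NV finV by (rule finite_subset)
    have "card N \<le> card {e\<in>E. v \<in> e}"
    proof (rule card_inj_on_le[of "\<lambda>u. {u,v}"])
      show "inj_on (\<lambda>u. {u, v}) N"
        unfolding inj_on_def N_def using edge_ne[OF g] by (auto simp: doubleton_eq_iff)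
      show "(\<lambda>u. {u, v}) ` N \<subseteq> {e \<in> E. v \<in> e}" unfolding N_def by auto
      show "finite {e \<in> E. v \<in> e}" using edges_sub[OF g] by simp
    qed
    hence cN: "card N \<le> 3" using v unfolding degree_def by linarith
    have "card (col ` N) \<le> 3" using card_image_le[OF finN, of col] cN by linarith
    have "\<not> {0..<4::nat} \<subseteq> col ` N"
    proof
      assume "{0..<4::nat} \<subseteq> col ` N"
      hence "card {0..<4::nat} \<le> card (col ` N)" using finN by (intro card_mono) auto
      thus False using \<open>card (col ` N) \<le> 3\<close> by simp
    qed
    then obtain c where c: "c < 4" "c \<notin> col ` N" by (auto simp: subset_iff)
    define col' where "col' = col(v := c)"
    show ?thesis unfolding colourable_def
    proof (intro exI conjI allI impI ballI)
      fix x assume "x \<in> V" thus "col' x < 4" using c c1 V'_def col'_def by auto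
    next
      fix x y assume e: "{x,y} \<in> E"
      have xy: "x \<noteq> y" using edge_ne[OF g e] by simp
      show "col' x \<noteq> col' y"
      proof (cases "x = v")
        case True
        hence "y \<in> N" using e N_def by (simp add: insert_commute)
        thus ?thesis using True xy c col'_def by auto
      next
        case xv: False
        show ?thesis
        proof (cases "y = v")
          case True
          hence "x \<in> N" using e N_def by simp
          thus ?thesis using True xv c col'_def by auto
        next
          case False
          hence "{x,y} \<in> E'" using e xv E'_def by auto
          thus ?thesis using c2 xv False col'_def by auto
        qed
      qed
    qed
  qed
qed

theorem mainTheorem5:
  fixes V :: "'a set" and E :: "'a set set"
  assumes "graph V E" and "fragile V E" and "girth V E \<ge> 4"
  shows "(card V \<ge> 3 \<longrightarrow> card E \<le> 2 * card V - 4)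
    \<and> (V \<noteq> {} \<longrightarrow> (\<exists>v\<in>V. degree E v \<le> 3) \<and> colourable 4 V E)"
proof -
  have t: "tf E" using girth_tf assms(1,3) by blast
  have "card V \<ge> 3 \<longrightarrow> card E \<le> 2 * card V - 4"
    using edge_bound[OF assms(1,2) t] unfolding fb_def by auto
  moreover have "V \<noteq> {} \<longrightarrow> (\<exists>v\<in>V. degree E v \<le> 3) \<and> colourable 4 V E"
    using low_degree[OF assms(1,2) t] colour[OF assms(1,2) t] by blast
  ultimately show ?thesis by blast
qed

end
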